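(* Let $Q=P_1\oplus\dots\oplus P_n$ be an ordinal sum of finite posets and let $r:Q\to R$ be a retraction. If $r[P_i]\not\subseteq P_i$ for some $i\in[1,n]$, then $R$ has the fixed point property.
   Context: The ordinal sum $P_1\oplus\dots\oplus P_n$ of pairwise disjoint posets has carrier $\bigcup_i P_i$, with $x\preceq y$ iff ($x,y\in P_i$ and $x\le_i y$) or ($x\in P_i$, $y\in P_j$, $i<j$). A retraction $r:Q\to R$ is an idempotent order-preserving map $Q\to Q$ with image $R$ (an induced subposet). A poset has the fixed point property if every order-preserving self-map has a fixed point. *)

theory Defs
  imports Main
begin

text \<open>Posets are carriers A together with a relation le with partial_order_on A le.
  Components are indexed by 1..n.\<close>

definition ordinal_sum_carrier :: "nat \<Rightarrow> (nat \<Rightarrow> 'a set) \<Rightarrow> 'a set" where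
  "ordinal_sum_carrier n P = (\<Union>i\<in>{1..n}. P i)"

definition ordinal_sum_rel :: "nat \<Rightarrow> (nat \<Rightarrow> 'a set) \<Rightarrow> (nat \<Rightarrow> 'a rel) \<Rightarrow> 'a rel" where
  "ordinal_sum_rel n P le =
     {(x, y). \<exists>i\<in>{1..n}. x \<in> P i \<and> y \<in> P i \<and> (x, y) \<in> le i}
   \<union> {(x, y). \<exists>i j. 1 \<le> i \<and> i < j \<and> j \<le> n \<and> x \<in> P i \<and> y \<in> P j}"

definition order_preserving :: "'a set \<Rightarrow> 'a rel \<Rightarrow> ('a \<Rightarrow> 'a) \<Rightarrow> bool" where
  "order_preserving A le f \<longleftrightarrow>
     (\<forall>x\<in>A. \<forall>y\<in>A. (x, y) \<in> le \<longrightarrow> (f x, f y) \<in> le)"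

definition induced_rel :: "'a rel \<Rightarrow> 'a set \<Rightarrow> 'a rel" where
  "induced_rel le B = le \<inter> (B \<times> B)"

definition retraction :: "'a set \<Rightarrow> 'a rel \<Rightarrow> ('a \<Rightarrow> 'a) \<Rightarrow> 'a set \<Rightarrow> bool" where
  "retraction Q le r R \<longleftrightarrow>
     (\<forall>x\<in>Q. r x \<in> Q) \<and> order_preserving Q le r \<and> (\<forall>x\<in>Q. r (r x) = r x) \<and> r ` Q = R"

definition fixed_point_property :: "'a set \<Rightarrow> 'a rel \<Rightarrow> bool" where
  "fixed_point_property A le \<longleftrightarrow>
     (\<forall>f. (\<forall>x\<in>A. f x \<in> A) \<and> order_preserving A le f \<longrightarrow> (\<exists>x\<in>A. f x = x))"

end

theory Submission
  imports Defs
begin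

lemma fp_chain:
  assumes finR: "finite R" and tr: "trans L" and an: "antisym L"
    and maps: "\<forall>x\<in>R. f x \<in> R"
    and mono: "\<forall>x\<in>R. \<forall>y\<in>R. (x,y)\<in>L \<longrightarrow> (f x, f y)\<in>L"
    and zR: "z \<in> R" and zf: "(z, f z) \<in> L"
  shows "\<exists>x\<in>R. f x = x"
proof -
  define c where "c k = (f^^k) z" for k
  have cR: "c k \<in> R" for k by (induction k) (auto simp: c_def zR maps)
  have step: "(c k, c (Suc k)) \<in> L" for k
  proof (induction k)
    case 0 then show ?case using zf by (simp add: c_def)
  next
    case (Suc k)
    have "(f (c k), f (c (Suc k))) \<in> L" using mono cR Suc by blast
    then show ?case by (simp add: c_def)
  qed
  have long: "(c k, c (k + Suc m)) \<in> L" for k m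
  proof (induction m)
    case 0 then show ?case using step by simp
  next
    case (Suc m)
    have "(c (k + Suc m), c (Suc (k + Suc m))) \<in> L" by (rule step)
    with Suc show ?case using tr by (metis add_Suc_right transD)
  qed
  have "range c \<subseteq> R" using cR by auto
  then have "finite (range c)" using finR finite_subset by blast
  then have "\<not> inj c" using finite_imageD by blast
  then obtain a b where ab: "a \<noteq> b" "c a = c b" unfolding inj_def by blast
  then obtain a b where ab: "a < b" "c a = c b"
    by (metis linorder_neqE_nat)
  have eq: "c (Suc a) = c a"
  proof (cases "b = Suc a")
    case True then show ?thesis using ab by simp
  next
    case False
    then obtain m where "b = Suc a + Suc m" using ab(1)
      by (metis add_Suc_right less_imp_Suc_add Suc_lessI)
    then have "(c (Suc a), c a) \<in> L" using long[of "Suc a" m] ab by simp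
    then show ?thesis using step[of a] an by (metis antisymD)
  qed
  show ?thesis using cR[of a] eq by (auto simp: c_def)
qed

theorem lemma2p1:
  fixes n :: nat and P :: "nat \<Rightarrow> 'a set" and le :: "nat \<Rightarrow> 'a rel"
    and r :: "'a \<Rightarrow> 'a" and R :: "'a set"
  assumes fin: "\<forall>i\<in>{1..n}. finite (P i)"
    and po: "\<forall>i\<in>{1..n}. partial_order_on (P i) (le i)"
    and disj: "\<forall>i\<in>{1..n}. \<forall>j\<in>{1..n}. i \<noteq> j \<longrightarrow> P i \<inter> P j = {}"
    and ret: "retraction (ordinal_sum_carrier n P) (ordinal_sum_rel n P le) r R"
    and moved: "\<exists>i\<in>{1..n}. \<not> (r ` P i \<subseteq> P i)"
  shows "fixed_point_property R (induced_rel (ordinal_sum_rel n P le) R)"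
proof -
  define Q where "Q = ordinal_sum_carrier n P"
  define L where "L = ordinal_sum_rel n P le"
  have uniq: "\<And>i j x. i \<in> {1..n} \<Longrightarrow> j \<in> {1..n} \<Longrightarrow> x \<in> P i \<Longrightarrow> x \<in> P j \<Longrightarrow> i = j"
    using disj by blast
  have trl: "\<And>i. i \<in> {1..n} \<Longrightarrow> trans (le i)"
    using po unfolding partial_order_on_def preorder_on_def by blast
  have anl: "\<And>i. i \<in> {1..n} \<Longrightarrow> antisym (le i)"
    using po unfolding partial_order_on_def by blast
  have cross: "\<And>i j x y. 1 \<le> i \<Longrightarrow> i < j \<Longrightarrow> j \<le> n \<Longrightarrow> x \<in> P i \<Longrightarrow> y \<in> P j \<Longrightarrow> (x,y) \<in> L"
    unfolding L_def ordinal_sum_rel_def by blast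
  have memL: "\<And>a b. (a,b) \<in> L \<longleftrightarrow> (\<exists>i\<in>{1..n}. a \<in> P i \<and> b \<in> P i \<and> (a,b) \<in> le i)
      \<or> (\<exists>i j. 1 \<le> i \<and> i < j \<and> j \<le> n \<and> a \<in> P i \<and> b \<in> P j)"
    unfolding L_def ordinal_sum_rel_def by blast
  have trL: "trans L"
  proof (rule transI)
    fix a b c assume h1: "(a,b) \<in> L" and h2: "(b,c) \<in> L"
    from h1[unfolded memL] show "(a,c) \<in> L"
    proof (elim disjE exE bexE conjE)
      fix i assume i: "i\<in>{1..n}" "a \<in> P i" "b \<in> P i" "(a,b) \<in> le i"
      from h2[unfolded memL] show "(a,c) \<in> L"
      proof (elim disjE exE bexE conjE)
        fix i' assume i': "i'\<in>{1..n}" "b \<in> P i'" "c \<in> P i'" "(b,c) \<in> le i'"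
        have "i = i'" using uniq i i' by blast
        then have "(a,c) \<in> le i" using trl[OF i(1)] i i' by (metis transD)
        then show "(a,c) \<in> L" unfolding memL using i i' \<open>i = i'\<close> by blast
      next
        fix i' j' assume "1 \<le> i'" "i' < j'" "j' \<le> n" "b \<in> P i'" "c \<in> P j'"
        moreover have "i = i'" using uniq i \<open>b \<in> P i'\<close> \<open>1 \<le> i'\<close> \<open>i' < j'\<close> \<open>j' \<le> n\<close> by force
        ultimately show "(a,c) \<in> L" unfolding memL using i by blast
      qed
    next
      fix i j assume ij: "1 \<le> i" "i < j" "j \<le> n" "a \<in> P i" "b \<in> P j"
      from h2[unfolded memL] show "(a,c) \<in> L"
      proof (elim disjE exE bexE conjE)
        fix i' assume i': "i'\<in>{1..n}" "b \<in> P i'" "c \<in> P i'" "(b,c) \<in> le i'"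
        have "j = i'" using uniq ij i' by force
        then show "(a,c) \<in> L" unfolding memL using ij i' by blast
      next
        fix i' j' assume i': "1 \<le> i'" "i' < j'" "j' \<le> n" "b \<in> P i'" "c \<in> P j'"
        have "j = i'" using uniq ij i' by force
        then have "i < j'" using ij i' by simp
        then show "(a,c) \<in> L" unfolding memL using ij i' by blast
      qed
    qed
  qed
  have anL: "antisym L"
  proof (rule antisymI)
    fix a b assume h1: "(a,b) \<in> L" and h2: "(b,a) \<in> L"
    show "a = b"
      using h1 h2 unfolding L_def ordinal_sum_rel_def
    proof (elim UnE CollectE case_prodE)
      fix x y x' y' assume e: "(a,b) = (x,y)" "(b,a) = (x',y')"
        and A: "\<exists>i\<in>{1..n}. x \<in> P i \<and> y \<in> P i \<and> (x, y) \<in> le i"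
        and B: "\<exists>i\<in>{1..n}. x' \<in> P i \<and> y' \<in> P i \<and> (x', y') \<in> le i"
      from A B e obtain i i' where "i\<in>{1..n}" "a \<in> P i" "b \<in> P i" "(a,b) \<in> le i"
        "i'\<in>{1..n}" "b \<in> P i'" "a \<in> P i'" "(b,a) \<in> le i'" by auto
      then show "a = b" using uniq anl by (metis antisymD)
    next
      fix x y x' y' assume e: "(a,b) = (x,y)" "(b,a) = (x',y')"
        and A: "\<exists>i\<in>{1..n}. x \<in> P i \<and> y \<in> P i \<and> (x, y) \<in> le i"
        and B: "\<exists>i j. 1 \<le> i \<and> i < j \<and> j \<le> n \<and> x' \<in> P i \<and> y' \<in> P j"
      from A B e obtain i i' j' where "i\<in>{1..n}" "a \<in> P i" "b \<in> P i"
        "1 \<le> i'" "i' < j'" "j' \<le> n" "b \<in> P i'" "a \<in> P j'" by auto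
      then show "a = b" using uniq[of i i' b] uniq[of i j' a] by auto
    next
      fix x y x' y' assume e: "(a,b) = (x,y)" "(b,a) = (x',y')"
        and B: "\<exists>i\<in>{1..n}. x' \<in> P i \<and> y' \<in> P i \<and> (x', y') \<in> le i"
        and A: "\<exists>i j. 1 \<le> i \<and> i < j \<and> j \<le> n \<and> x \<in> P i \<and> y \<in> P j"
      from A B e obtain i i' j' where "i\<in>{1..n}" "a \<in> P i" "b \<in> P i"
        "1 \<le> i'" "i' < j'" "j' \<le> n" "a \<in> P i'" "b \<in> P j'" by auto
      then show "a = b" using uniq[of i i' a] uniq[of i j' b] by auto
    next
      fix x y x' y' assume e: "(a,b) = (x,y)" "(b,a) = (x',y')"
        and B: "\<exists>i j. 1 \<le> i \<and> i < j \<and> j \<le> n \<and> x' \<in> P i \<and> y' \<in> P j"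
        and A: "\<exists>i j. 1 \<le> i \<and> i < j \<and> j \<le> n \<and> x \<in> P i \<and> y \<in> P j"
      from A B e obtain i j i' j' where
        "1 \<le> i" "i < j" "j \<le> n" "a \<in> P i" "b \<in> P j"
        "1 \<le> i'" "i' < j'" "j' \<le> n" "b \<in> P i'" "a \<in> P j'" by auto
      then show "a = b" using uniq[of j i' b] uniq[of i j' a] by auto
    qed
  qed
  have rQ: "\<forall>x\<in>Q. r x \<in> Q" and rmono: "order_preserving Q L r"
    and ridem: "\<forall>x\<in>Q. r (r x) = r x" and RQ: "r ` Q = R"
    using ret unfolding retraction_def Q_def L_def by auto
  have rm: "\<And>x y. x \<in> Q \<Longrightarrow> y \<in> Q \<Longrightarrow> (x,y) \<in> L \<Longrightarrow> (r x, r y) \<in> L"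
    using rmono unfolding order_preserving_def by blast
  have Qmem: "\<And>x. x \<in> Q \<longleftrightarrow> (\<exists>i\<in>{1..n}. x \<in> P i)"
    unfolding Q_def ordinal_sum_carrier_def by blast
  have finR: "finite R"
    using fin RQ unfolding Q_def ordinal_sum_carrier_def by auto
  obtain i x where i: "i \<in> {1..n}" "x \<in> P i" "r x \<notin> P i" using moved by blast
  have xQ: "x \<in> Q" using Qmem i by blast
  define z where "z = r x"
  have zQ: "z \<in> Q" using rQ xQ z_def by blast
  then obtain j where j: "j \<in> {1..n}" "z \<in> P j" using Qmem by blast
  have jne: "j \<noteq> i" using i j z_def by blast
  have zR: "z \<in> R" using RQ xQ z_def by blast
  have rz: "r z = z" using ridem xQ z_def by simp
  have comp: "(z, w) \<in> L \<or> (w, z) \<in> L" if wR: "w \<in> R" for w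
  proof -
    obtain y where y: "y \<in> Q" "w = r y" using wR RQ by blast
    then obtain k where k: "k \<in> {1..n}" "y \<in> P k" using Qmem by blast
    consider "k < i" | "k = i" | "i < k" by linarith
    then show ?thesis
    proof cases
      case 1
      then have "(y,x) \<in> L" using cross k i by auto
      then show ?thesis using rm y xQ z_def by blast
    next
      case 2
      show ?thesis
      proof (cases "i < j")
        case True
        then have "(y,z) \<in> L" using cross k j 2 by auto
        then show ?thesis using rm y zQ rz by metis
      next
        case False
        then have "j < i" using jne by simp
        then have "(z,y) \<in> L" using cross k j 2 by auto
        then show ?thesis using rm y zQ rz by metis
      qed
    next
      case 3
      then have "(x,y) \<in> L" using cross k i by auto
      then show ?thesis using rm y xQ z_def by blast
    qed
  qed
  show ?thesis
    unfolding fixed_point_property_def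
  proof (intro allI impI, elim conjE)
    fix f assume maps: "\<forall>x\<in>R. f x \<in> R"
      and op: "order_preserving R (induced_rel (ordinal_sum_rel n P le) R) f"
    define L' where "L' = induced_rel L R"
    have trL': "trans L'" using trL unfolding L'_def induced_rel_def trans_def by blast
    have anL': "antisym L'" using anL unfolding L'_def induced_rel_def antisym_def by blast
    have mono: "\<forall>x\<in>R. \<forall>y\<in>R. (x,y)\<in>L' \<longrightarrow> (f x, f y)\<in>L'"
      using op unfolding order_preserving_def L'_def L_def by blast
    have fzR: "f z \<in> R" using maps zR by blast
    from comp[OF fzR] show "\<exists>x\<in>R. f x = x"
    proof
      assume "(z, f z) \<in> L"
      then have "(z, f z) \<in> L'" using zR fzR unfolding L'_def induced_rel_def by blast
      then show ?thesis using fp_chain[OF finR trL' anL' maps mono zR] by blast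
    next
      assume "(f z, z) \<in> L"
      then have "(z, f z) \<in> L'\<inverse>" using zR fzR unfolding L'_def induced_rel_def by blast
      moreover have "trans (L'\<inverse>)" using trL' by (simp add: trans_def)
      moreover have "antisym (L'\<inverse>)" using anL' by simp
      moreover have "\<forall>x\<in>R. \<forall>y\<in>R. (x,y)\<in>L'\<inverse> \<longrightarrow> (f x, f y)\<in>L'\<inverse>" using mono by blast
      ultimately show ?thesis using fp_chain[OF finR _ _ maps _ zR] by blast
    qed
  qed
qed

end
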